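(* Let $h,n\geq 2$ and let $V\leq S_h$ contain a complete intransitive subgroup of $S_h$ in $k$ blocks, for some $2\leq k\leq\min\{h,n!\}$. Then $V\times\{id\}$ is an anonymity group with respect to $(h,n)$.
   Context: For a partition $\{H_1,\dots,H_k\}$ of $H=[h]$ into $k$ nonempty parts, the subgroup $S_{H_1}\times\cdots\times S_{H_k}\leq S_h$ (permutations preserving each $H_i$) is called a complete intransitive subgroup of $S_h$ in $k$ blocks. Permutations compose as $(\sigma\tau)(x)=\sigma(\tau(x))$. Let $G=S_h\times S_n$ and $\mathcal{P}=(S_n)^h$ (preference profiles), with action $(p^{(\varphi,\psi)})_i=\psi\,p_{\varphi^{-1}(i)}$. A social preference function (SPF) is any $F:\mathcal{P}\to S_n$; its symmetry group is $G(F)=\{(\varphi,\psi)\in G: F(p^{(\varphi,\psi)})=\psi F(p)\ \forall p\}$ and its anonymity group is $G_1(F)=G(F)\cap(S_h\times\{id\})$. A subgroup $U\leq S_h\times\{id\}$ is an anonymity group with respect to $(h,n)$ if $U=G_1(F)$ for some SPF $F$. *)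

theory Defs
  imports "HOL-Algebra.Sym_Groups" "HOL-Library.Disjoint_Sets"
begin

(* Voters H = [h] = {1..h}, alternatives [n] = {1..n}.  S_m = carrier (sym_group m),
   permutations of {1..m} (identity outside), composition (\<circ>). *)

type_synonym perm = "nat \<Rightarrow> nat"
type_synonym profile = "nat \<Rightarrow> perm"

(* preference profiles (S_n)^h, stored extensionally: p i = id for i outside {1..h} *)
definition profiles :: "nat \<Rightarrow> nat \<Rightarrow> profile set" where
  "profiles h n = {p. (\<forall>i\<in>{1..h}. p i \<in> carrier (sym_group n)) \<and> (\<forall>i. i \<notin> {1..h} \<longrightarrow> p i = id)}"

definition act :: "nat \<Rightarrow> perm \<Rightarrow> perm \<Rightarrow> profile \<Rightarrow> profile" where
  "act h f g p = (\<lambda>i. if i \<in> {1..h} then g \<circ> p (Hilbert_Choice.inv f i) else id)"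

definition is_SPF :: "nat \<Rightarrow> nat \<Rightarrow> (profile \<Rightarrow> perm) \<Rightarrow> bool" where
  "is_SPF h n F \<longleftrightarrow> (\<forall>p\<in>profiles h n. F p \<in> carrier (sym_group n))"

definition symmetry_group :: "nat \<Rightarrow> nat \<Rightarrow> (profile \<Rightarrow> perm) \<Rightarrow> (perm \<times> perm) set" where
  "symmetry_group h n F = {(f, g). f \<in> carrier (sym_group h) \<and> g \<in> carrier (sym_group n) \<and>
      (\<forall>p\<in>profiles h n. F (act h f g p) = g \<circ> F p)}"

definition anonymity_group_of :: "nat \<Rightarrow> nat \<Rightarrow> (profile \<Rightarrow> perm) \<Rightarrow> (perm \<times> perm) set" where
  "anonymity_group_of h n F = symmetry_group h n F \<inter> (carrier (sym_group h) \<times> {id})"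

definition is_anonymity_group :: "nat \<Rightarrow> nat \<Rightarrow> (perm \<times> perm) set \<Rightarrow> bool" where
  "is_anonymity_group h n U \<longleftrightarrow> (\<exists>F. is_SPF h n F \<and> U = anonymity_group_of h n F)"

(* complete intransitive subgroup S_{H_1} x ... x S_{H_k} for a partition P of {1..h} *)
definition complete_intransitive :: "nat \<Rightarrow> nat set set \<Rightarrow> perm set" where
  "complete_intransitive h P = {f. f \<in> carrier (sym_group h) \<and> (\<forall>B\<in>P. f ` B = B)}"

end

theory Submission
  imports Defs
begin

lemma act_comp:
  assumes "f permutes {1..h}" "g permutes {1..h}"
  shows "act h f id (act h g id p) = act h (f \<circ> g) id p"
proof -
  have bf: "bij f" and bg: "bij g" using assms permutes_bij by blast+
  have inv_eq: "inv' (f \<circ> g) = inv' g \<circ> inv' f" using o_inv_distrib[OF bf bg] .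
  show ?thesis unfolding act_def
  proof
    fix i
    show "(if i \<in> {1..h} then id \<circ> (\<lambda>i. if i \<in> {1..h} then id \<circ> p (inv' g i) else id) (inv' f i) else id)
       = (if i \<in> {1..h} then id \<circ> p (inv' (f \<circ> g) i) else id)"
      using permutes_in_image[OF permutes_inv[OF assms(1)], of i] inv_eq by auto
  qed
qed

lemma act_id:
  assumes "p \<in> profiles h n"
  shows "act h id id p = p"
  using assms unfolding act_def profiles_def by (auto simp: inv_id)

lemma act_profiles:
  assumes "p \<in> profiles h n" "f permutes {1..h}"
  shows "act h f id p \<in> profiles h n"
  using assms permutes_in_image[OF permutes_inv[OF assms(2)]] unfolding act_def profiles_def
  by auto

theorem mainTheorem3:
  fixes h n k :: nat and V :: "perm set" and P :: "nat set set"
  assumes "h \<ge> 2" and "n \<ge> 2"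
    and "subgroup V (sym_group h)"
    and "partition_on {1..h} P" and "card P = k"
    and "2 \<le> k" and "k \<le> min h (fact n)"
    and "complete_intransitive h P \<subseteq> V"
  shows "is_anonymity_group h n (V \<times> {id})"
proof -
  note sg = assms(3)
  have Vc: "\<And>v. v \<in> V \<Longrightarrow> v permutes {1..h}"
    using subgroup.subset[OF sg] sym_group_carrier by blast
  have Vm: "\<And>f v. f \<in> V \<Longrightarrow> v \<in> V \<Longrightarrow> f \<circ> v \<in> V"
    using subgroup.m_closed[OF sg] by (metis sym_group_mult)
  have Vi: "\<And>f. f \<in> V \<Longrightarrow> inv' f \<in> V"
    using subgroup.m_inv_closed[OF sg] subgroup.subset[OF sg] sym_group_inv_equality by (metis subsetD)
  have Vid: "id \<in> V" using subgroup.one_closed[OF sg] by (metis sym_group_one)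
  have finP: "finite P" using assms(5,6) card.infinite by fastforce
  have "card P \<le> card {p. p permutes {1..n}}"
    using assms(5,7) card_permutations[of "{1..n}" n] by simp
  then obtain c where c: "c ` P \<subseteq> {p. p permutes {1..n}}" "inj_on c P"
    using card_le_inj[OF finP] finite_permutations[of "{1..n}"] by blast
  have part: "\<And>i. i \<in> {1..h} \<Longrightarrow> \<exists>!B. B \<in> P \<and> i \<in> B"
    using assms(4) partition_onD1[OF assms(4)] partition_onD2[OF assms(4)]
    by (auto simp: disjoint_def)
  define blk where "blk i = (THE B. B \<in> P \<and> i \<in> B)" for i
  have blk: "\<And>i. i \<in> {1..h} \<Longrightarrow> blk i \<in> P \<and> i \<in> blk i"
    unfolding blk_def using part by (metis (no_types, lifting) theI')
  have blk_u: "\<And>i B. B \<in> P \<Longrightarrow> i \<in> B \<Longrightarrow> blk i = B"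
    unfolding blk_def using part partition_onD1[OF assms(4)]
    by (metis (no_types, lifting) UnionI the_equality)
  define p0 where "p0 i = (if i \<in> {1..h} then c (blk i) else id)" for i
  have p0prof: "p0 \<in> profiles h n"
    unfolding profiles_def p0_def using c blk sym_group_carrier by fastforce
  have stab: "g \<in> V" if g: "g permutes {1..h}" and eq: "act h g id p0 = p0" for g
  proof -
    have A: "inv' g i \<in> blk i" if i: "i \<in> {1..h}" for i
    proof -
      have gi: "inv' g i \<in> {1..h}" using permutes_in_image[OF permutes_inv[OF g]] i by simp
      have "act h g id p0 i = p0 i" using eq by simp
      hence "c (blk (inv' g i)) = c (blk i)" using i gi unfolding act_def p0_def by simp
      hence "blk (inv' g i) = blk i" using c(2) blk i gi by (meson inj_onD)
      thus ?thesis using blk gi by metis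
    qed
    have "g ` B = B" if B: "B \<in> P" for B
    proof
      show "g ` B \<subseteq> B"
      proof
        fix y assume "y \<in> g ` B"
        then obtain x where x: "x \<in> B" "y = g x" by blast
        have xh: "x \<in> {1..h}" using x B partition_onD1[OF assms(4)] by blast
        have yh: "y \<in> {1..h}" using permutes_in_image[OF g] xh x by simp
        have "x \<in> blk y" using A[OF yh] x permutes_inverses[OF g] by simp
        hence "blk y = B" using blk_u[OF B x(1)] blk_u blk yh by metis
        thus "y \<in> B" using blk yh by metis
      qed
    next
      show "B \<subseteq> g ` B"
      proof
        fix x assume x: "x \<in> B"
        have xh: "x \<in> {1..h}" using x B partition_onD1[OF assms(4)] by blast
        have "inv' g x \<in> B" using A[OF xh] blk_u[OF B x] by simp
        thus "x \<in> g ` B" using permutes_inverses[OF g] by (metis image_eqI)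
      qed
    qed
    hence "g \<in> complete_intransitive h P"
      unfolding complete_intransitive_def using g sym_group_carrier by blast
    thus ?thesis using assms(8) by blast
  qed
  define Orb where "Orb = {act h v id p0 | v. v \<in> V}"
  define \<tau> where "\<tau> = Transposition.transpose (1::nat) 2"
  have tau: "\<tau> permutes {1..n}" unfolding \<tau>_def using assms(2) by (intro permutes_swap_id) auto
  have tau_ne: "\<tau> \<noteq> id" unfolding \<tau>_def by (metis id_apply transpose_apply_first numeral_One numeral_eq_one_iff semiring_norm(85))
  define F where "F p = (if p \<in> Orb then id else \<tau>)" for p
  have SPF: "is_SPF h n F"
    unfolding is_SPF_def F_def using tau sym_group_carrier permutes_id by auto
  have inv_O: "act h f id p \<in> Orb \<longleftrightarrow> p \<in> Orb" if f: "f \<in> V" and p: "p \<in> profiles h n" for f p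
  proof
    assume "act h f id p \<in> Orb"
    then obtain v where v: "v \<in> V" "act h f id p = act h v id p0" unfolding Orb_def by blast
    have "p = act h (inv' f \<circ> f) id p" using act_id[OF p] permutes_inv_o(2)[OF Vc[OF f]] by simp
    also have "\<dots> = act h (inv' f) id (act h f id p)"
      using act_comp Vc f permutes_inv by metis
    also have "\<dots> = act h (inv' f \<circ> v) id p0" using v act_comp Vc Vi f by metis
    finally show "p \<in> Orb" unfolding Orb_def using Vm Vi f v by blast
  next
    assume "p \<in> Orb"
    then obtain v where v: "v \<in> V" "p = act h v id p0" unfolding Orb_def by blast
    hence "act h f id p = act h (f \<circ> v) id p0" using act_comp Vc f by metis
    thus "act h f id p \<in> Orb" unfolding Orb_def using Vm f v by blast
  qed
  have p0Orb: "p0 \<in> Orb" unfolding Orb_def using act_id[OF p0prof] Vid by force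
  have "V \<times> {id} = anonymity_group_of h n F"
  proof
    show "V \<times> {id} \<subseteq> anonymity_group_of h n F"
      unfolding anonymity_group_of_def symmetry_group_def F_def
      using Vc inv_O sym_group_carrier permutes_id by auto
  next
    show "anonymity_group_of h n F \<subseteq> V \<times> {id}"
    proof
      fix x assume "x \<in> anonymity_group_of h n F"
      then obtain f where x: "x = (f, id)" and f: "f permutes {1..h}"
        and eq: "\<forall>p\<in>profiles h n. F (act h f id p) = F p"
        unfolding anonymity_group_of_def symmetry_group_def sym_group_carrier by auto
      have "F (act h f id p0) = id" using eq p0prof p0Orb F_def by simp
      hence "act h f id p0 \<in> Orb" using tau_ne F_def by metis
      then obtain v where v: "v \<in> V" "act h f id p0 = act h v id p0" unfolding Orb_def by blast
      have "act h (inv' v \<circ> f) id p0 = act h (inv' v) id (act h f id p0)"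
        using act_comp Vc Vi v f by metis
      also have "\<dots> = act h (inv' v \<circ> v) id p0" using v act_comp Vc Vi by metis
      also have "\<dots> = p0" using permutes_inv_o(2)[OF Vc[OF v(1)]] act_id[OF p0prof] by simp
      finally have "inv' v \<circ> f \<in> V" using stab permutes_compose permutes_inv f Vc v by metis
      hence "v \<circ> (inv' v \<circ> f) \<in> V" using Vm v by blast
      hence "f \<in> V" using permutes_inv_o(1)[OF Vc[OF v(1)]] by (simp add: o_assoc)
      thus "x \<in> V \<times> {id}" using x by simp
    qed
  qed
  thus ?thesis unfolding is_anonymity_group_def using SPF by blast
qed

end
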